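(* Let $\phi\in UC(\mathbb{R}^{N+1})$ be almost periodic in the $m$-th variable, for some $m\in\{1,\dots,N+1\}$. Then from any real sequence $(s_n)_{n\in\mathbb{N}}$ one can extract a subsequence $(s_{n_k})_{k\in\mathbb{N}}$ such that, for every choice of $(X_1,\dots,X_{m-1},X_{m+1},\dots,X_{N+1})$, the sequence $\big(\phi(X_1,\dots,X_m+s_{n_k},\dots,X_{N+1})\big)_{k}$ converges uniformly in $X_m\in\mathbb{R}$.
   Context: $UC$ means uniformly continuous. A continuous $g:\mathbb{R}\to\mathbb{R}$ is almost periodic if from every real sequence $(s_n)$ one can extract a subsequence along which $g(\cdot+s_{n_k})$ converges uniformly on $\mathbb{R}$; $\phi$ on $\mathbb{R}^{N+1}$ is almost periodic in the $m$-th variable if for each fixed value of the other variables the function $X_m\mapsto\phi(\dots,X_m,\dots)$ is almost periodic. *)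

theory Defs
  imports "HOL-Analysis.Analysis"
begin

definition almost_periodic :: "(real \<Rightarrow> real) \<Rightarrow> bool" where
  "almost_periodic g \<longleftrightarrow> continuous_on UNIV g \<and>
     (\<forall>s :: nat \<Rightarrow> real. \<exists>r. strict_mono r \<and>
        (\<exists>h. uniform_limit UNIV (\<lambda>k x. g (x + s (r k))) h sequentially))"

definition upd_coord :: "real^'n \<Rightarrow> 'n \<Rightarrow> real \<Rightarrow> real^'n" where
  "upd_coord X m t = (\<chi> i. if i = m then t else X $ i)"

definition almost_periodic_in :: "(real^'n \<Rightarrow> real) \<Rightarrow> 'n \<Rightarrow> bool" where
  "almost_periodic_in \<phi> m \<longleftrightarrow> (\<forall>X. almost_periodic (\<lambda>t. \<phi> (upd_coord X m t)))"

end

theory Submission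
  imports Defs "HOL-Library.Diagonal_Subsequence"
begin

lemma upd_dist: "dist (upd_coord X m u) (upd_coord Y m u) \<le> dist X Y"
  unfolding dist_norm upd_coord_def
  by (rule norm_le_componentwise_cart) (auto simp: vector_minus_component)

lemma ulim_subseq:
  assumes "uniform_limit UNIV f l sequentially" "strict_mono r"
  shows "uniform_limit UNIV (f \<circ> r) l sequentially"
  using filterlim_compose[OF assms(1) filterlim_subseq[OF assms(2)]] by (simp add: comp_def)

lemma ulim_shift:
  assumes "uniform_limit UNIV (\<lambda>n. f (k + n)) l sequentially"
  shows "uniform_limit UNIV f l sequentially"
proof -
  have "\<forall>e>0. \<forall>\<^sub>F n in sequentially. \<forall>x\<in>UNIV. dist (f (n + k) x) (l x) < e"
    using assms unfolding uniform_limit_iff by (simp add: add.commute)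
  then show ?thesis unfolding uniform_limit_iff
    using eventually_sequentially_seg by blast
qed

theorem mainTheorem10:
  fixes \<phi> :: "real^'n \<Rightarrow> real" and m :: 'n and s :: "nat \<Rightarrow> real"
  assumes "uniformly_continuous_on UNIV \<phi>"
    and "almost_periodic_in \<phi> m"
  shows "\<exists>r. strict_mono r \<and>
           (\<forall>X :: real^'n. \<exists>h.
              uniform_limit UNIV (\<lambda>k t. \<phi> (upd_coord X m (t + s (r k)))) h sequentially)"
proof -
  obtain D :: "(real^'n) set" where D: "countable D"
    "\<And>U. open U \<Longrightarrow> U \<noteq> {} \<Longrightarrow> \<exists>d\<in>D. d \<in> U"
    using countable_dense_exists by blast
  have "D \<noteq> {}" using D(2)[OF open_UNIV] by blast
  define d where "d = from_nat_into D"
  have dD: "\<And>x. x \<in> D \<Longrightarrow> \<exists>j. d j = x" unfolding d_def using D(1) by (metis from_nat_into_surj)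
  define P where "P = (\<lambda>j (r::nat\<Rightarrow>nat). \<exists>h.
      uniform_limit UNIV (\<lambda>k t. \<phi> (upd_coord (d j) m (t + s (r k)))) h sequentially)"
  interpret subseqs P
  proof
    fix n and q :: "nat \<Rightarrow> nat" assume "strict_mono q"
    have "almost_periodic (\<lambda>t. \<phi> (upd_coord (d n) m t))"
      using assms(2) unfolding almost_periodic_in_def by blast
    then obtain r' h where "strict_mono r'"
      "uniform_limit UNIV (\<lambda>k x. \<phi> (upd_coord (d n) m (x + (s \<circ> q) (r' k)))) h sequentially"
      unfolding almost_periodic_def by blast
    then show "\<exists>r'. strict_mono r' \<and> P n (q \<circ> r')"
      unfolding P_def by (auto simp: comp_def)
  qed
  have Peq: "P j r \<longleftrightarrow> (\<exists>h.
      uniform_limit UNIV (\<lambda>k t. \<phi> (upd_coord (d j) m (t + s (r k)))) h sequentially)" for j r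
    by (simp add: P_def)
  have stable: "P n (q \<circ> r)" if "strict_mono r" "P n q" for r q n
    using that ulim_subseq unfolding Peq by (fastforce simp: comp_def)
  have shiftP: "P j q" if H: "P j (q \<circ> (+) (Suc j))" for j q
  proof -
    obtain h where "uniform_limit UNIV (\<lambda>k t. \<phi> (upd_coord (d j) m (t + s (q (Suc j + k))))) h sequentially"
      using H unfolding Peq comp_def by blast
    then show ?thesis unfolding Peq
      using ulim_shift[where k="Suc j" and f="\<lambda>k t. \<phi> (upd_coord (d j) m (t + s (q k)))"] by blast
  qed
  have Pd: "P j diagseq" for j
    using shiftP diagseq_holds[OF stable] by blast
  have "\<exists>h. uniform_limit UNIV (\<lambda>k t. \<phi> (upd_coord X m (t + s (diagseq k)))) h sequentially" for X
  proof -
    have "uniformly_Cauchy_on UNIV (\<lambda>k t. \<phi> (upd_coord X m (t + s (diagseq k))))"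
      unfolding uniformly_Cauchy_on_def
    proof (intro allI impI)
      fix e :: real assume e: "e > 0"
      obtain \<delta> where \<delta>: "\<delta> > 0" "\<And>x y. dist x y < \<delta> \<Longrightarrow> dist (\<phi> x) (\<phi> y) < e/3"
        using assms(1) e unfolding uniformly_continuous_on_def
        by (metis UNIV_I divide_pos_pos zero_less_numeral)
      obtain y where y: "y \<in> D" "y \<in> ball X \<delta>" using D(2)[of "ball X \<delta>"] \<delta> by auto
      obtain j where j: "d j = y" using dD y(1) by blast
      have "uniformly_Cauchy_on UNIV (\<lambda>k t. \<phi> (upd_coord (d j) m (t + s (diagseq k))))"
        using Pd[of j] unfolding Peq uniformly_convergent_eq_Cauchy[symmetric]
          uniformly_convergent_on_def by blast
      then obtain M where M: "\<And>t a b. a \<ge> M \<Longrightarrow> b \<ge> M \<Longrightarrow>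
          dist (\<phi> (upd_coord (d j) m (t + s (diagseq a)))) (\<phi> (upd_coord (d j) m (t + s (diagseq b)))) < e/3"
        unfolding uniformly_Cauchy_on_def using e
        by (metis UNIV_I divide_pos_pos zero_less_numeral)
      have close: "dist (\<phi> (upd_coord X m u)) (\<phi> (upd_coord (d j) m u)) < e/3" for u
      proof -
        have "dist X (d j) < \<delta>" using y(2) j by simp
        then have "dist (upd_coord X m u) (upd_coord (d j) m u) < \<delta>"
          using upd_dist[of X m u "d j"] by linarith
        then show ?thesis using \<delta>(2) by blast
      qed
      show "\<exists>M. \<forall>x\<in>UNIV. \<forall>a\<ge>M. \<forall>b\<ge>M. dist (\<phi> (upd_coord X m (x + s (diagseq a))))
               (\<phi> (upd_coord X m (x + s (diagseq b)))) < e"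
      proof (intro exI ballI allI impI)
        fix t a b assume ab: "M \<le> a" "M \<le> b"
        have 1: "dist (\<phi> (upd_coord X m (t + s (diagseq a)))) (\<phi> (upd_coord (d j) m (t + s (diagseq a)))) < e/3"
          by (rule close)
        have 3: "dist (\<phi> (upd_coord (d j) m (t + s (diagseq b)))) (\<phi> (upd_coord X m (t + s (diagseq b)))) < e/3"
          using close by (simp add: dist_commute)
        show "dist (\<phi> (upd_coord X m (t + s (diagseq a)))) (\<phi> (upd_coord X m (t + s (diagseq b)))) < e"
          using dist_triangle[of "\<phi> (upd_coord X m (t + s (diagseq a)))" "\<phi> (upd_coord X m (t + s (diagseq b)))"
              "\<phi> (upd_coord (d j) m (t + s (diagseq a)))"]
            dist_triangle[of "\<phi> (upd_coord (d j) m (t + s (diagseq a)))" "\<phi> (upd_coord X m (t + s (diagseq b)))"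
              "\<phi> (upd_coord (d j) m (t + s (diagseq b)))"]
            1 M[OF ab, of t] 3 by linarith
      qed
    qed
    then show ?thesis unfolding uniformly_convergent_eq_Cauchy[symmetric] uniformly_convergent_on_def .
  qed
  then show ?thesis using subseq_diagseq by blast
qed

end
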